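(* Let $R$ be an associative unital algebra over a field $k$, let $P(t)\in R[t]$ be a monic polynomial of degree $n$ ($t$ central), and let $S$ be a set of pseudo-roots of $P(t)$ containing elements $a_1,\dots,a_n$ with $P(t)=(t-a_1)(t-a_2)\cdots(t-a_n)$. Let $\Gamma=\Gamma(P,S)$ be the graph of right divisors and $\mathcal P(t)\in A(\Gamma)[t]$ the associated polynomial. Then there is a canonical algebra homomorphism $\alpha:A(\Gamma)\to R$, sending the edge from $(t-a)B(t)$ to $B(t)$ to $a$, such that the induced homomorphism $\hat\alpha:A(\Gamma)[t]\to R[t]$ maps $\mathcal P(t)$ to $P(t)$.
   Context: An element $x\in R$ is a pseudo-root of $P(t)$ if $P(t)=Q_1(t)(t-x)Q_2(t)$ for some $Q_1,Q_2\in R[t]$. The graph $\Gamma(P,S)$: its vertices are the monic polynomials $B(t)\in R[t]$ of degree between $0$ and $n$ such that $P(t)=Q(t)B(t)$ for some $Q(t)\in R[t]$; there is an edge from $B_1(t)$ to $B_2(t)$ (tail $B_1$, head $B_2$) whenever $B_1(t)=(t-x)B_2(t)$ for some $x\in S$. For a directed graph $\Gamma=(V,E)$ (each edge $e$ has tail $t(e)$ and head $h(e)$; a directed path is $e_1,\dots,e_k$ with $t(e_{i+1})=h(e_i)$), $A(\Gamma)$ is the quotient of the free associative $k$-algebra on $E$ by the relations that for any two directed paths $(e_1,\dots,e_k)$, $(e'_1,\dots,e'_l)$ with common origin and common terminus, $(t-e_1)\cdots(t-e_k)=(t-e'_1)\cdots(t-e'_l)$ coefficientwise. Here $\mathcal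 P(t)=(t-f_1)\cdots(t-f_m)\in A(\Gamma)[t]$ for any directed path $(f_1,\dots,f_m)$ in $\Gamma(P,S)$ from the vertex $P(t)$ to the vertex $1$ (such a path exists and $\mathcal P(t)$ does not depend on its choice). *)

theory Defs
  imports "HOL-Algebra.UnivPoly" "HOL-Algebra.QuotRing"
begin

text \<open>For a ring R, the polynomial ring R[t] is the HOL-Algebra structure UP R
  (t commutes with all coefficients).\<close>

definition polyvar :: "('a, 'm) ring_scheme \<Rightarrow> nat \<Rightarrow> 'a" where
  "polyvar R = monom (UP R) \<one>\<^bsub>R\<^esub> 1"

definition lin :: "('a, 'm) ring_scheme \<Rightarrow> 'a \<Rightarrow> nat \<Rightarrow> 'a" where
  "lin R x = polyvar R \<ominus>\<^bsub>UP R\<^esub> monom (UP R) x 0"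

definition lin_prod :: "('a, 'm) ring_scheme \<Rightarrow> 'a list \<Rightarrow> nat \<Rightarrow> 'a" where
  "lin_prod R xs = foldr (\<lambda>x Q. lin R x \<otimes>\<^bsub>UP R\<^esub> Q) xs \<one>\<^bsub>UP R\<^esub>"

definition monic_poly :: "('a, 'm) ring_scheme \<Rightarrow> (nat \<Rightarrow> 'a) \<Rightarrow> bool" where
  "monic_poly R B \<longleftrightarrow> B \<in> carrier (UP R) \<and> coeff (UP R) B (deg R B) = \<one>\<^bsub>R\<^esub>"

definition pseudo_root :: "('a, 'm) ring_scheme \<Rightarrow> (nat \<Rightarrow> 'a) \<Rightarrow> 'a \<Rightarrow> bool" where
  "pseudo_root R P x \<longleftrightarrow> x \<in> carrier R \<and>
     (\<exists>Q1 \<in> carrier (UP R). \<exists>Q2 \<in> carrier (UP R).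
        P = Q1 \<otimes>\<^bsub>UP R\<^esub> lin R x \<otimes>\<^bsub>UP R\<^esub> Q2)"

definition div_vertices :: "('a, 'm) ring_scheme \<Rightarrow> (nat \<Rightarrow> 'a) \<Rightarrow> nat \<Rightarrow> (nat \<Rightarrow> 'a) set" where
  "div_vertices R P n = {B. monic_poly R B \<and> deg R B \<le> n \<and>
       (\<exists>Q \<in> carrier (UP R). P = Q \<otimes>\<^bsub>UP R\<^esub> B)}"

text \<open>An edge is the pair (tail, head) = (B1, B2) with B1 = (t - x) B2 for some x in S.\<close>
definition div_edges :: "('a, 'm) ring_scheme \<Rightarrow> (nat \<Rightarrow> 'a) \<Rightarrow> nat \<Rightarrow> 'a set
     \<Rightarrow> ((nat \<Rightarrow> 'a) \<times> (nat \<Rightarrow> 'a)) set" where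
  "div_edges R P n S = {(B1, B2). B1 \<in> div_vertices R P n \<and> B2 \<in> div_vertices R P n \<and>
       (\<exists>x \<in> S. B1 = lin R x \<otimes>\<^bsub>UP R\<^esub> B2)}"

inductive is_path :: "('v \<times> 'v) set \<Rightarrow> 'v \<Rightarrow> ('v \<times> 'v) list \<Rightarrow> 'v \<Rightarrow> bool"
  for E where
  path_nil: "is_path E v [] v"
| path_cons: "(v, u) \<in> E \<Longrightarrow> is_path E u es w \<Longrightarrow> is_path E v ((v, u) # es) w"

text \<open>Noncommutative polynomials: finitely supported K-valued functions on words over E;
  the product is concatenation-convolution.\<close>
definition free_alg :: "('k, 'b) ring_scheme \<Rightarrow> 'e set \<Rightarrow> ('e list \<Rightarrow> 'k) ring" where
  "free_alg K E = \<lparr>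
     carrier = {f. (\<forall>w. f w \<in> carrier K) \<and> (\<forall>w. f w \<noteq> \<zero>\<^bsub>K\<^esub> \<longrightarrow> set w \<subseteq> E)
                   \<and> finite {w. f w \<noteq> \<zero>\<^bsub>K\<^esub>}},
     mult = (\<lambda>f g w. \<Oplus>\<^bsub>K\<^esub> i \<in> {..length w}. f (take i w) \<otimes>\<^bsub>K\<^esub> g (drop i w)),
     one = (\<lambda>w. if w = [] then \<one>\<^bsub>K\<^esub> else \<zero>\<^bsub>K\<^esub>),
     zero = (\<lambda>w. \<zero>\<^bsub>K\<^esub>),
     add = (\<lambda>f g w. f w \<oplus>\<^bsub>K\<^esub> g w) \<rparr>"

definition free_gen :: "('k, 'b) ring_scheme \<Rightarrow> 'e \<Rightarrow> 'e list \<Rightarrow> 'k" where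
  "free_gen K e = (\<lambda>w. if w = [e] then \<one>\<^bsub>K\<^esub> else \<zero>\<^bsub>K\<^esub>)"

definition free_scalar :: "('k, 'b) ring_scheme \<Rightarrow> 'k \<Rightarrow> 'e list \<Rightarrow> 'k" where
  "free_scalar K c = (\<lambda>w. if w = [] then c else \<zero>\<^bsub>K\<^esub>)"

definition path_relations :: "('k, 'b) ring_scheme \<Rightarrow> 'v set \<Rightarrow> ('v \<times> 'v) set
     \<Rightarrow> (('v \<times> 'v) list \<Rightarrow> 'k) set" where
  "path_relations K V E = {r. \<exists>v w p q j. v \<in> V \<and> w \<in> V \<and> is_path E v p w \<and> is_path E v q w \<and>
       r = coeff (UP (free_alg K E)) (lin_prod (free_alg K E) (map (free_gen K) p)) j
           \<ominus>\<^bsub>free_alg K E\<^esub>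
           coeff (UP (free_alg K E)) (lin_prod (free_alg K E) (map (free_gen K) q)) j}"

definition rel_ideal :: "('k, 'b) ring_scheme \<Rightarrow> 'v set \<Rightarrow> ('v \<times> 'v) set
     \<Rightarrow> (('v \<times> 'v) list \<Rightarrow> 'k) set" where
  "rel_ideal K V E = genideal (free_alg K E) (path_relations K V E)"

definition graph_alg :: "('k, 'b) ring_scheme \<Rightarrow> 'v set \<Rightarrow> ('v \<times> 'v) set
     \<Rightarrow> (('v \<times> 'v) list \<Rightarrow> 'k) set ring" where
  "graph_alg K V E = free_alg K E Quot rel_ideal K V E"

definition graph_class :: "('k, 'b) ring_scheme \<Rightarrow> 'v set \<Rightarrow> ('v \<times> 'v) set
     \<Rightarrow> (('v \<times> 'v) list \<Rightarrow> 'k) \<Rightarrow> (('v \<times> 'v) list \<Rightarrow> 'k) set" where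
  "graph_class K V E f = rel_ideal K V E +>\<^bsub>free_alg K E\<^esub> f"

definition graph_path_poly :: "('k, 'b) ring_scheme \<Rightarrow> 'v set \<Rightarrow> ('v \<times> 'v) set
     \<Rightarrow> ('v \<times> 'v) list \<Rightarrow> nat \<Rightarrow> (('v \<times> 'v) list \<Rightarrow> 'k) set" where
  "graph_path_poly K V E p =
     lin_prod (graph_alg K V E) (map (\<lambda>e. graph_class K V E (free_gen K e)) p)"

end

theory Submission
  imports Defs
begin

section \<open>Splittings of words and sum manipulations\<close>

definition splits :: "'a list \<Rightarrow> ('a list \<times> 'a list) set" where
  "splits w = {(u, v). u @ v = w}"

lemma splits_eq: "splits w = (\<lambda>i. (take i w, drop i w)) ` {..length w}"
proof
  show "splits w \<subseteq> (\<lambda>i. (take i w, drop i w)) ` {..length w}"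
  proof
    fix p assume "p \<in> splits w"
    then obtain u v where p: "p = (u, v)" "u @ v = w" by (auto simp: splits_def)
    then show "p \<in> (\<lambda>i. (take i w, drop i w)) ` {..length w}"
      by (intro image_eqI[where x="length u"]) auto
  qed
qed (auto simp: splits_def)

lemma finite_splits [simp]: "finite (splits w)"
  by (simp add: splits_eq)

lemma inj_split: "inj_on (\<lambda>i. (take i w, drop i w)) {..length w}"
  by (rule inj_onI) (metis Pair_inject atMost_iff length_take min.absorb2)

definition triples :: "'a list \<Rightarrow> ('a list \<times> 'a list \<times> 'a list) set" where
  "triples w = {(u, v, y). u @ v @ y = w}"

lemma triples_sub: "triples w \<subseteq> (\<lambda>(p, q). (fst q, snd q, snd p)) ` Sigma (splits w) (\<lambda>p. splits (fst p))"
proof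
  fix t assume "t \<in> triples w"
  then obtain u v y where t: "t = (u, v, y)" "u @ v @ y = w" by (auto simp: triples_def)
  show "t \<in> (\<lambda>(p, q). (fst q, snd q, snd p)) ` Sigma (splits w) (\<lambda>p. splits (fst p))"
    by (rule image_eqI[where x="((u @ v, y), (u, v))"]) (use t in \<open>auto simp: splits_def\<close>)
qed

lemma finite_triples [simp]: "finite (triples w)"
  by (rule finite_subset[OF triples_sub]) auto

context abelian_monoid
begin

lemma finsum_splits:
  assumes "\<And>u v. F u v \<in> carrier G"
  shows "(\<Oplus>i\<in>{..length w}. F (take i w) (drop i w)) = (\<Oplus>p\<in>splits w. F (fst p) (snd p))"
proof -
  have "(\<Oplus>p\<in>splits w. F (fst p) (snd p))
      = (\<Oplus>i\<in>{..length w}. (\<lambda>p. F (fst p) (snd p)) ((\<lambda>i. (take i w, drop i w)) i))"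
    unfolding splits_eq by (rule finsum_reindex) (auto simp: assms inj_split)
  then show ?thesis by simp
qed

lemma finsum_Sigma:
  assumes "finite A" "\<And>i. i \<in> A \<Longrightarrow> finite (B i)" "\<And>i j. g i j \<in> carrier G"
  shows "(\<Oplus>i\<in>A. \<Oplus>j\<in>B i. g i j) = (\<Oplus>p\<in>Sigma A B. g (fst p) (snd p))"
proof -
  have S: "Sigma A B = (\<Union>i\<in>A. Pair i ` B i)" by auto
  have "(\<Oplus>p\<in>Sigma A B. g (fst p) (snd p)) = (\<Oplus>i\<in>A. \<Oplus>p\<in>Pair i ` B i. g (fst p) (snd p))"
    unfolding S
    by (rule add.finprod_UN_disjoint) (auto simp: assms pairwise_def disjnt_def)
  also have "\<dots> = (\<Oplus>i\<in>A. \<Oplus>j\<in>B i. g i j)"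
  proof (rule finsum_cong')
    fix i assume "i \<in> A"
    show "(\<Oplus>p\<in>Pair i ` B i. g (fst p) (snd p)) = (\<Oplus>j\<in>B i. g i j)"
      by (subst finsum_reindex) (auto simp: assms inj_on_def)
  qed (auto simp: assms)
  finally show ?thesis by simp
qed

lemma finsum_triples_left:
  assumes "\<And>u v y. F u v y \<in> carrier G"
  shows "(\<Oplus>p\<in>splits w. \<Oplus>q\<in>splits (fst p). F (fst q) (snd q) (snd p))
       = (\<Oplus>t\<in>triples w. F (fst t) (fst (snd t)) (snd (snd t)))"
proof -
  let ?h = "\<lambda>t. ((fst t @ fst (snd t), snd (snd t)), (fst t, fst (snd t)))"
  have img: "?h ` triples w = Sigma (splits w) (\<lambda>p. splits (fst p))"
  proof
    show "?h ` triples w \<subseteq> Sigma (splits w) (\<lambda>p. splits (fst p))"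
      by (auto simp: triples_def splits_def)
    show "Sigma (splits w) (\<lambda>p. splits (fst p)) \<subseteq> ?h ` triples w"
    proof
      fix z assume "z \<in> Sigma (splits w) (\<lambda>p. splits (fst p))"
      then obtain x y u v where z: "z = ((x, y), (u, v))" "x @ y = w" "u @ v = x"
        by (auto simp: splits_def)
      show "z \<in> ?h ` triples w"
        by (rule image_eqI[where x="(u, v, y)"]) (use z in \<open>auto simp: triples_def\<close>)
    qed
  qed
  have inj: "inj_on ?h (triples w)" by (rule inj_onI) auto
  have "(\<Oplus>p\<in>splits w. \<Oplus>q\<in>splits (fst p). F (fst q) (snd q) (snd p))
      = (\<Oplus>z\<in>Sigma (splits w) (\<lambda>p. splits (fst p)). F (fst (snd z)) (snd (snd z)) (snd (fst z)))"
    by (rule finsum_Sigma) (auto simp: assms)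
  also have "\<dots> = (\<Oplus>t\<in>triples w. F (fst t) (fst (snd t)) (snd (snd t)))"
    unfolding img[symmetric] by (subst finsum_reindex) (auto simp: assms inj)
  finally show ?thesis .
qed

lemma finsum_triples_right:
  assumes "\<And>u v y. F u v y \<in> carrier G"
  shows "(\<Oplus>p\<in>splits w. \<Oplus>q\<in>splits (snd p). F (fst p) (fst q) (snd q))
       = (\<Oplus>t\<in>triples w. F (fst t) (fst (snd t)) (snd (snd t)))"
proof -
  let ?h = "\<lambda>t. ((fst t, fst (snd t) @ snd (snd t)), (fst (snd t), snd (snd t)))"
  have img: "?h ` triples w = Sigma (splits w) (\<lambda>p. splits (snd p))"
  proof
    show "?h ` triples w \<subseteq> Sigma (splits w) (\<lambda>p. splits (snd p))"
      by (auto simp: triples_def splits_def)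
    show "Sigma (splits w) (\<lambda>p. splits (snd p)) \<subseteq> ?h ` triples w"
    proof
      fix z assume "z \<in> Sigma (splits w) (\<lambda>p. splits (snd p))"
      then obtain x y u v where z: "z = ((x, y), (u, v))" "x @ y = w" "u @ v = y"
        by (auto simp: splits_def)
      show "z \<in> ?h ` triples w"
        by (rule image_eqI[where x="(x, u, v)"]) (use z in \<open>auto simp: triples_def\<close>)
    qed
  qed
  have inj: "inj_on ?h (triples w)" by (rule inj_onI) auto
  have "(\<Oplus>p\<in>splits w. \<Oplus>q\<in>splits (snd p). F (fst p) (fst q) (snd q))
      = (\<Oplus>z\<in>Sigma (splits w) (\<lambda>p. splits (snd p)). F (fst (fst z)) (fst (snd z)) (snd (snd z)))"
    by (rule finsum_Sigma) (auto simp: assms)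
  also have "\<dots> = (\<Oplus>t\<in>triples w. F (fst t) (fst (snd t)) (snd (snd t)))"
    unfolding img[symmetric] by (subst finsum_reindex) (auto simp: assms inj_on_def)
  finally show ?thesis .
qed

lemma finsum_words_splits:
  assumes "finite W" "\<And>u v. H u v \<in> carrier G"
  shows "(\<Oplus>w\<in>W. \<Oplus>p\<in>splits w. H (fst p) (snd p)) = (\<Oplus>p\<in>{(u, v). u @ v \<in> W}. H (fst p) (snd p))"
proof -
  have img: "snd ` Sigma W splits = {(u, v). u @ v \<in> W}"
    by (force simp: splits_def)
  have inj: "inj_on snd (Sigma W splits)" by (rule inj_onI) (auto simp: splits_def)
  have "(\<Oplus>w\<in>W. \<Oplus>p\<in>splits w. H (fst p) (snd p)) = (\<Oplus>z\<in>Sigma W splits. H (fst (snd z)) (snd (snd z)))"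
    by (rule finsum_Sigma) (auto simp: assms)
  also have "\<dots> = (\<Oplus>p\<in>{(u, v). u @ v \<in> W}. H (fst p) (snd p))"
    unfolding img[symmetric] by (subst finsum_reindex) (auto simp: assms inj)
  finally show ?thesis .
qed

end


section \<open>The free algebra is a ring\<close>

locale fa_ctx = K: cring K for K :: "('k, 'b) ring_scheme" (structure) and E :: "'e set"
begin

abbreviation FA where "FA \<equiv> free_alg K E"

lemma fa_carrier_iff:
  "f \<in> carrier FA \<longleftrightarrow> (\<forall>w. f w \<in> carrier K) \<and> (\<forall>w. f w \<noteq> \<zero> \<longrightarrow> set w \<subseteq> E)
      \<and> finite {w. f w \<noteq> \<zero>}"
  by (simp add: free_alg_def)

lemma fa_val: "f \<in> carrier FA \<Longrightarrow> f w \<in> carrier K"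
  by (simp add: fa_carrier_iff)

lemma fa_supp: "f \<in> carrier FA \<Longrightarrow> f w \<noteq> \<zero> \<Longrightarrow> set w \<subseteq> E"
  by (simp add: fa_carrier_iff)

lemma fa_fin: "f \<in> carrier FA \<Longrightarrow> finite {w. f w \<noteq> \<zero>}"
  by (simp add: fa_carrier_iff)

lemma fa_add: "f \<oplus>\<^bsub>FA\<^esub> g = (\<lambda>w. f w \<oplus> g w)"
  by (simp add: free_alg_def)

lemma fa_zero: "\<zero>\<^bsub>FA\<^esub> = (\<lambda>w. \<zero>)"
  by (simp add: free_alg_def)

lemma fa_one: "\<one>\<^bsub>FA\<^esub> = (\<lambda>w. if w = [] then \<one> else \<zero>)"
  by (simp add: free_alg_def)

lemma fa_mult: "f \<in> carrier FA \<Longrightarrow> g \<in> carrier FA \<Longrightarrow>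
   f \<otimes>\<^bsub>FA\<^esub> g = (\<lambda>w. \<Oplus>p\<in>splits w. f (fst p) \<otimes> g (snd p))"
proof -
  assume f: "f \<in> carrier FA" and g: "g \<in> carrier FA"
  have "f \<otimes>\<^bsub>FA\<^esub> g = (\<lambda>w. \<Oplus>i\<in>{..length w}. f (take i w) \<otimes> g (drop i w))"
    by (simp add: free_alg_def)
  also have "\<dots> = (\<lambda>w. \<Oplus>p\<in>splits w. f (fst p) \<otimes> g (snd p))"
    by (rule ext, rule K.finsum_splits) (simp add: fa_val f g)
  finally show ?thesis .
qed

lemma fa_mult_nz:
  assumes f: "f \<in> carrier FA" and g: "g \<in> carrier FA" and nz: "(f \<otimes>\<^bsub>FA\<^esub> g) w \<noteq> \<zero>"
  shows "\<exists>u v. u @ v = w \<and> f u \<noteq> \<zero> \<and> g v \<noteq> \<zero>"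
proof (rule ccontr)
  assume nex: "\<not> ?thesis"
  have "f (fst p) \<otimes> g (snd p) = \<zero>" if "p \<in> splits w" for p
  proof -
    from that have "fst p @ snd p = w" by (auto simp: splits_def)
    with nex have "f (fst p) = \<zero> \<or> g (snd p) = \<zero>" by blast
    then show ?thesis using fa_val[OF f] fa_val[OF g] by auto
  qed
  then have "(f \<otimes>\<^bsub>FA\<^esub> g) w = (\<Oplus>p\<in>splits w. \<zero>)"
    unfolding fa_mult[OF f g] by (intro K.finsum_cong') auto
  with nz show False by simp
qed

lemma fa_mult_closed:
  assumes f: "f \<in> carrier FA" and g: "g \<in> carrier FA"
  shows "f \<otimes>\<^bsub>FA\<^esub> g \<in> carrier FA"
proof -
  have vals: "\<forall>w. (f \<otimes>\<^bsub>FA\<^esub> g) w \<in> carrier K"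
    unfolding fa_mult[OF f g] by (auto intro!: K.finsum_closed simp: fa_val f g)
  have sup: "\<forall>w. (f \<otimes>\<^bsub>FA\<^esub> g) w \<noteq> \<zero> \<longrightarrow> set w \<subseteq> E"
  proof (intro allI impI)
    fix w assume "(f \<otimes>\<^bsub>FA\<^esub> g) w \<noteq> \<zero>"
    then obtain u v where "u @ v = w" "f u \<noteq> \<zero>" "g v \<noteq> \<zero>"
      using fa_mult_nz[OF f g] by blast
    then show "set w \<subseteq> E" using fa_supp[OF f, of u] fa_supp[OF g, of v] by auto
  qed
  have "{w. (f \<otimes>\<^bsub>FA\<^esub> g) w \<noteq> \<zero>} \<subseteq> (\<lambda>(u, v). u @ v) ` ({u. f u \<noteq> \<zero>} \<times> {v. g v \<noteq> \<zero>})"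
    using fa_mult_nz[OF f g] by fastforce
  then have "finite {w. (f \<otimes>\<^bsub>FA\<^esub> g) w \<noteq> \<zero>}"
    by (rule finite_subset) (use fa_fin[OF f] fa_fin[OF g] in auto)
  with vals sup show ?thesis by (simp add: fa_carrier_iff)
qed

lemma fa_add_closed:
  assumes f: "f \<in> carrier FA" and g: "g \<in> carrier FA"
  shows "f \<oplus>\<^bsub>FA\<^esub> g \<in> carrier FA"
proof -
  have "{w. f w \<oplus> g w \<noteq> \<zero>} \<subseteq> {w. f w \<noteq> \<zero>} \<union> {w. g w \<noteq> \<zero>}"
    using fa_val[OF f] fa_val[OF g] by auto
  then have "finite {w. f w \<oplus> g w \<noteq> \<zero>}"
    by (rule finite_subset) (use fa_fin[OF f] fa_fin[OF g] in auto)
  moreover have "\<forall>w. f w \<oplus> g w \<noteq> \<zero> \<longrightarrow> set w \<subseteq> E"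
    using fa_val[OF f] fa_val[OF g] fa_supp[OF f] fa_supp[OF g] by force
  ultimately show ?thesis
    using fa_val[OF f] fa_val[OF g] by (simp add: fa_add fa_carrier_iff K.a_closed)
qed

lemma fa_zero_closed: "\<zero>\<^bsub>FA\<^esub> \<in> carrier FA"
  by (simp add: fa_zero fa_carrier_iff)

lemma fa_one_closed: "\<one>\<^bsub>FA\<^esub> \<in> carrier FA"
proof -
  have "{w. (if w = [] then \<one> else \<zero>) \<noteq> \<zero>} \<subseteq> {[]}" by auto
  then have "finite {w. (if w = [] then \<one> else \<zero>) \<noteq> \<zero>}" by (rule finite_subset) auto
  then show ?thesis by (simp add: fa_one fa_carrier_iff)
qed

lemma fa_m_assoc:
  assumes f: "f \<in> carrier FA" and g: "g \<in> carrier FA" and h: "h \<in> carrier FA"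
  shows "(f \<otimes>\<^bsub>FA\<^esub> g) \<otimes>\<^bsub>FA\<^esub> h = f \<otimes>\<^bsub>FA\<^esub> (g \<otimes>\<^bsub>FA\<^esub> h)"
proof (rule ext)
  fix w
  have c: "\<And>u. f u \<in> carrier K" "\<And>u. g u \<in> carrier K" "\<And>u. h u \<in> carrier K"
    using f g h by (auto simp: fa_val)
  have "((f \<otimes>\<^bsub>FA\<^esub> g) \<otimes>\<^bsub>FA\<^esub> h) w
      = (\<Oplus>p\<in>splits w. (\<Oplus>q\<in>splits (fst p). f (fst q) \<otimes> g (snd q)) \<otimes> h (snd p))"
    by (subst fa_mult[OF fa_mult_closed[OF f g] h], subst fa_mult[OF f g]) simp
  also have "\<dots> = (\<Oplus>p\<in>splits w. \<Oplus>q\<in>splits (fst p). f (fst q) \<otimes> g (snd q) \<otimes> h (snd p))"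
    by (intro K.finsum_cong') (auto simp: K.finsum_ldistr c)
  also have "\<dots> = (\<Oplus>t\<in>triples w. f (fst t) \<otimes> g (fst (snd t)) \<otimes> h (snd (snd t)))"
    by (rule K.finsum_triples_left) (simp add: c)
  also have "\<dots> = (\<Oplus>p\<in>splits w. \<Oplus>q\<in>splits (snd p). f (fst p) \<otimes> (g (fst q) \<otimes> h (snd q)))"
    by (subst K.finsum_triples_right) (auto simp: c K.m_assoc intro!: K.finsum_cong')
  also have "\<dots> = (\<Oplus>p\<in>splits w. f (fst p) \<otimes> (\<Oplus>q\<in>splits (snd p). g (fst q) \<otimes> h (snd q)))"
    by (intro K.finsum_cong') (auto simp: K.finsum_rdistr c)
  also have "\<dots> = (f \<otimes>\<^bsub>FA\<^esub> (g \<otimes>\<^bsub>FA\<^esub> h)) w"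
    by (subst fa_mult[OF f fa_mult_closed[OF g h]], subst fa_mult[OF g h]) simp
  finally show "((f \<otimes>\<^bsub>FA\<^esub> g) \<otimes>\<^bsub>FA\<^esub> h) w = (f \<otimes>\<^bsub>FA\<^esub> (g \<otimes>\<^bsub>FA\<^esub> h)) w" .
qed

lemma fa_l_one:
  assumes f: "f \<in> carrier FA"
  shows "\<one>\<^bsub>FA\<^esub> \<otimes>\<^bsub>FA\<^esub> f = f"
proof (rule ext)
  fix w
  have "(\<one>\<^bsub>FA\<^esub> \<otimes>\<^bsub>FA\<^esub> f) w = (\<Oplus>p\<in>splits w. (if fst p = [] then \<one> else \<zero>) \<otimes> f (snd p))"
    by (subst fa_mult[OF fa_one_closed f]) (simp add: fa_one)
  also have "\<dots> = (\<Oplus>p\<in>splits w. if ([], w) = p then f (snd p) else \<zero>)"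
    by (intro K.finsum_cong') (auto simp: splits_def fa_val f)
  also have "\<dots> = f (snd ([], w))"
  proof -
    have m: "([], w) \<in> splits w" by (simp add: splits_def)
    show ?thesis using K.add.finprod_singleton[OF m finite_splits, of "\<lambda>p. f (snd p)"]
      by (simp add: fa_val f Pi_def)
  qed
  finally show "(\<one>\<^bsub>FA\<^esub> \<otimes>\<^bsub>FA\<^esub> f) w = f w" by simp
qed

lemma fa_r_one:
  assumes f: "f \<in> carrier FA"
  shows "f \<otimes>\<^bsub>FA\<^esub> \<one>\<^bsub>FA\<^esub> = f"
proof (rule ext)
  fix w
  have "(f \<otimes>\<^bsub>FA\<^esub> \<one>\<^bsub>FA\<^esub>) w = (\<Oplus>p\<in>splits w. f (fst p) \<otimes> (if snd p = [] then \<one> else \<zero>))"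
    by (subst fa_mult[OF f fa_one_closed]) (simp add: fa_one)
  also have "\<dots> = (\<Oplus>p\<in>splits w. if (w, []) = p then f (fst p) else \<zero>)"
    by (intro K.finsum_cong') (auto simp: splits_def fa_val f)
  also have "\<dots> = f (fst (w, []))"
  proof -
    have m: "(w, []) \<in> splits w" by (simp add: splits_def)
    show ?thesis using K.add.finprod_singleton[OF m finite_splits, of "\<lambda>p. f (fst p)"]
      by (simp add: fa_val f Pi_def)
  qed
  finally show "(f \<otimes>\<^bsub>FA\<^esub> \<one>\<^bsub>FA\<^esub>) w = f w" by simp
qed

lemma fa_l_distr:
  assumes f: "f \<in> carrier FA" and g: "g \<in> carrier FA" and h: "h \<in> carrier FA"
  shows "(f \<oplus>\<^bsub>FA\<^esub> g) \<otimes>\<^bsub>FA\<^esub> h = f \<otimes>\<^bsub>FA\<^esub> h \<oplus>\<^bsub>FA\<^esub> g \<otimes>\<^bsub>FA\<^esub> h"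
proof (rule ext)
  fix w
  have c: "\<And>u. f u \<in> carrier K" "\<And>u. g u \<in> carrier K" "\<And>u. h u \<in> carrier K"
    using f g h by (auto simp: fa_val)
  have "((f \<oplus>\<^bsub>FA\<^esub> g) \<otimes>\<^bsub>FA\<^esub> h) w = (\<Oplus>p\<in>splits w. (f (fst p) \<oplus> g (fst p)) \<otimes> h (snd p))"
    by (subst fa_mult[OF fa_add_closed[OF f g] h]) (simp add: fa_add)
  also have "\<dots> = (\<Oplus>p\<in>splits w. f (fst p) \<otimes> h (snd p)) \<oplus> (\<Oplus>p\<in>splits w. g (fst p) \<otimes> h (snd p))"
    by (simp add: K.l_distr c Pi_def)
  also have "\<dots> = (f \<otimes>\<^bsub>FA\<^esub> h \<oplus>\<^bsub>FA\<^esub> g \<otimes>\<^bsub>FA\<^esub> h) w"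
    by (simp add: fa_add fa_mult f g h)
  finally show "((f \<oplus>\<^bsub>FA\<^esub> g) \<otimes>\<^bsub>FA\<^esub> h) w = (f \<otimes>\<^bsub>FA\<^esub> h \<oplus>\<^bsub>FA\<^esub> g \<otimes>\<^bsub>FA\<^esub> h) w" .
qed

lemma fa_r_distr:
  assumes f: "f \<in> carrier FA" and g: "g \<in> carrier FA" and h: "h \<in> carrier FA"
  shows "h \<otimes>\<^bsub>FA\<^esub> (f \<oplus>\<^bsub>FA\<^esub> g) = h \<otimes>\<^bsub>FA\<^esub> f \<oplus>\<^bsub>FA\<^esub> h \<otimes>\<^bsub>FA\<^esub> g"
proof (rule ext)
  fix w
  have c: "\<And>u. f u \<in> carrier K" "\<And>u. g u \<in> carrier K" "\<And>u. h u \<in> carrier K"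
    using f g h by (auto simp: fa_val)
  have "(h \<otimes>\<^bsub>FA\<^esub> (f \<oplus>\<^bsub>FA\<^esub> g)) w = (\<Oplus>p\<in>splits w. h (fst p) \<otimes> (f (snd p) \<oplus> g (snd p)))"
    by (subst fa_mult[OF h fa_add_closed[OF f g]]) (simp add: fa_add)
  also have "\<dots> = (\<Oplus>p\<in>splits w. h (fst p) \<otimes> f (snd p)) \<oplus> (\<Oplus>p\<in>splits w. h (fst p) \<otimes> g (snd p))"
    by (simp add: K.r_distr c Pi_def)
  also have "\<dots> = (h \<otimes>\<^bsub>FA\<^esub> f \<oplus>\<^bsub>FA\<^esub> h \<otimes>\<^bsub>FA\<^esub> g) w"
    by (simp add: fa_add fa_mult f g h)
  finally show "(h \<otimes>\<^bsub>FA\<^esub> (f \<oplus>\<^bsub>FA\<^esub> g)) w = (h \<otimes>\<^bsub>FA\<^esub> f \<oplus>\<^bsub>FA\<^esub> h \<otimes>\<^bsub>FA\<^esub> g) w" .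
qed

lemma fa_ring: "ring FA"
proof (rule ringI)
  show "abelian_group FA"
  proof (rule abelian_groupI)
    fix x assume x: "x \<in> carrier FA"
    show "\<exists>y\<in>carrier FA. y \<oplus>\<^bsub>FA\<^esub> x = \<zero>\<^bsub>FA\<^esub>"
    proof (intro bexI)
      show "(\<lambda>w. \<ominus> x w) \<oplus>\<^bsub>FA\<^esub> x = \<zero>\<^bsub>FA\<^esub>"
        by (simp add: fa_add fa_zero K.l_neg fa_val x)
      have iff: "(\<ominus> x w = \<zero>) = (x w = \<zero>)" for w
      proof
        have xw: "x w \<in> carrier K" by (rule fa_val[OF x])
        assume "\<ominus> x w = \<zero>"
        then have "\<ominus> (\<ominus> x w) = \<ominus> \<zero>" by simp
        then show "x w = \<zero>" using xw by simp
      qed simp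
      have "{w. \<ominus> x w \<noteq> \<zero>} = {w. x w \<noteq> \<zero>}"
        by (simp add: iff)
      then show "(\<lambda>w. \<ominus> x w) \<in> carrier FA"
        using x by (simp add: fa_carrier_iff)
    qed
  next
    show "\<And>x y. x \<in> carrier FA \<Longrightarrow> y \<in> carrier FA \<Longrightarrow> x \<oplus>\<^bsub>FA\<^esub> y \<in> carrier FA"
      by (rule fa_add_closed)
  next
    show "\<zero>\<^bsub>FA\<^esub> \<in> carrier FA" by (rule fa_zero_closed)
  next
    show "\<And>x y z. x \<in> carrier FA \<Longrightarrow> y \<in> carrier FA \<Longrightarrow> z \<in> carrier FA \<Longrightarrow>
        x \<oplus>\<^bsub>FA\<^esub> y \<oplus>\<^bsub>FA\<^esub> z = x \<oplus>\<^bsub>FA\<^esub> (y \<oplus>\<^bsub>FA\<^esub> z)"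
      by (simp add: fa_add fa_val K.a_assoc)
  next
    show "\<And>x y. x \<in> carrier FA \<Longrightarrow> y \<in> carrier FA \<Longrightarrow> x \<oplus>\<^bsub>FA\<^esub> y = y \<oplus>\<^bsub>FA\<^esub> x"
      by (simp add: fa_add fa_val K.a_comm)
  next
    show "\<And>x. x \<in> carrier FA \<Longrightarrow> \<zero>\<^bsub>FA\<^esub> \<oplus>\<^bsub>FA\<^esub> x = x"
      by (simp add: fa_add fa_zero fa_val)
  qed
  show "monoid FA"
    by (rule monoidI) (simp_all only: fa_mult_closed fa_one_closed fa_m_assoc fa_l_one fa_r_one)
qed (simp_all only: fa_l_distr fa_r_distr)

end

section \<open>Linear factors in R[t]\<close>

context UP_ring
begin

lemma polyvar_closed: "polyvar R \<in> carrier P"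
  unfolding polyvar_def P_def[symmetric] by simp

lemma lin_closed: "x \<in> carrier R \<Longrightarrow> lin R x \<in> carrier P"
  unfolding lin_def polyvar_def P_def[symmetric] by simp

lemma lin_prod_closed: "set xs \<subseteq> carrier R \<Longrightarrow> lin_prod R xs \<in> carrier P"
  unfolding lin_prod_def P_def[symmetric] by (induction xs) (auto simp: lin_closed)

lemma lin_prod_Cons: "lin_prod R (x # xs) = lin R x \<otimes>\<^bsub>P\<^esub> lin_prod R xs"
  unfolding lin_prod_def P_def[symmetric] by simp

lemma lin_prod_Nil: "lin_prod R [] = \<one>\<^bsub>P\<^esub>"
  unfolding lin_prod_def P_def[symmetric] by simp

lemma coeff_shift:
  assumes Q: "Q \<in> carrier P"
  shows "coeff P (monom P \<one> 1 \<otimes>\<^bsub>P\<^esub> Q) j = (if j = 0 then \<zero> else coeff P Q (j - 1))"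
proof (cases j)
  case 0
  then show ?thesis using Q by simp
next
  case (Suc m)
  have "coeff P (monom P \<one> 1 \<otimes>\<^bsub>P\<^esub> Q) (m + 1) = \<one> \<otimes> coeff P Q m"
    by (rule coeff_monom_mult) (simp_all add: Q)
  then show ?thesis using Suc Q by simp
qed

lemma coeff_lin_mult:
  assumes x: "x \<in> carrier R" and Q: "Q \<in> carrier P"
  shows "coeff P (lin R x \<otimes>\<^bsub>P\<^esub> Q) j = (if j = 0 then \<zero> else coeff P Q (j - 1)) \<ominus> x \<otimes> coeff P Q j"
proof -
  have m1: "monom P \<one> 1 \<in> carrier P" and m0: "monom P x 0 \<in> carrier P" using x by simp_all
  have "lin R x \<otimes>\<^bsub>P\<^esub> Q = monom P \<one> 1 \<otimes>\<^bsub>P\<^esub> Q \<ominus>\<^bsub>P\<^esub> monom P x 0 \<otimes>\<^bsub>P\<^esub> Q"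
    unfolding lin_def polyvar_def P_def[symmetric]
    by (simp add: P.minus_eq P.l_distr P.l_minus m1 m0 Q)
  moreover have "coeff P (monom P x 0 \<otimes>\<^bsub>P\<^esub> Q) j = x \<otimes> coeff P Q j"
    using coeff_monom_mult[OF x Q, of 0 j] by simp
  ultimately show ?thesis
    using coeff_shift[OF Q, of j] by (simp add: m1 m0 Q)
qed

lemma coeff_mult_top_monic:
  assumes D: "D \<in> carrier P" and w: "w \<in> carrier P" and mon: "coeff P w (deg R w) = \<one>"
  shows "coeff P (D \<otimes>\<^bsub>P\<^esub> w) (deg R D + deg R w) = coeff P D (deg R D)"
proof -
  let ?d = "deg R D" and ?e = "deg R w"
  have "coeff P (D \<otimes>\<^bsub>P\<^esub> w) (?d + ?e) = (\<Oplus>i\<in>{..?d + ?e}. coeff P D i \<otimes> coeff P w (?d + ?e - i))"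
    using D w by simp
  also have "\<dots> = (\<Oplus>i\<in>{..?d + ?e}. if ?d = i then coeff P D i \<otimes> coeff P w (?d + ?e - i) else \<zero>)"
  proof (rule R.finsum_cong')
    fix i assume "i \<in> {..?d + ?e}"
    show "coeff P D i \<otimes> coeff P w (?d + ?e - i) = (if ?d = i then coeff P D i \<otimes> coeff P w (?d + ?e - i) else \<zero>)"
    proof (cases "?d = i")
      case False
      show ?thesis
      proof (cases "?d < i")
        case True
        then show ?thesis using False D w by (simp add: deg_aboveD)
      next
        case F2: False
        with False have "?e < ?d + ?e - i" by arith
        then show ?thesis using False D w by (simp add: deg_aboveD)
      qed
    qed simp
  qed (auto simp: D w)
  also have "\<dots> = coeff P D ?d \<otimes> coeff P w (?d + ?e - ?d)"
    by (rule R.add.finprod_singleton) (auto simp: D w)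
  finally show ?thesis using mon D by simp
qed

lemma monic_cancel:
  assumes A: "A \<in> carrier P" and B: "B \<in> carrier P" and w: "w \<in> carrier P"
    and mon: "coeff P w (deg R w) = \<one>" and eq: "A \<otimes>\<^bsub>P\<^esub> w = B \<otimes>\<^bsub>P\<^esub> w"
  shows "A = B"
proof -
  define D where "D = A \<ominus>\<^bsub>P\<^esub> B"
  have Dc: "D \<in> carrier P" using A B by (simp add: D_def)
  have "D \<otimes>\<^bsub>P\<^esub> w = A \<otimes>\<^bsub>P\<^esub> w \<ominus>\<^bsub>P\<^esub> B \<otimes>\<^bsub>P\<^esub> w"
    by (simp add: D_def P.minus_eq P.l_distr P.l_minus A B w)
  also have "\<dots> = \<zero>\<^bsub>P\<^esub>" using eq A B w by (simp add: P.minus_eq P.r_neg)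
  finally have Dw: "D \<otimes>\<^bsub>P\<^esub> w = \<zero>\<^bsub>P\<^esub>" .
  have "D = \<zero>\<^bsub>P\<^esub>"
  proof (rule ccontr)
    assume nz: "D \<noteq> \<zero>\<^bsub>P\<^esub>"
    have "coeff P D (deg R D) = coeff P (D \<otimes>\<^bsub>P\<^esub> w) (deg R D + deg R w)"
      using coeff_mult_top_monic[OF Dc w mon] by simp
    also have "\<dots> = \<zero>" using Dw by simp
    finally show False using lcoeff_nonzero[OF nz Dc] by simp
  qed
  then have "A \<oplus>\<^bsub>P\<^esub> \<ominus>\<^bsub>P\<^esub> B = \<zero>\<^bsub>P\<^esub>" by (simp add: D_def P.minus_eq)
  then have "\<ominus>\<^bsub>P\<^esub> (\<ominus>\<^bsub>P\<^esub> B) = A"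
    by (intro P.minus_equality) (simp_all add: A B)
  then show ?thesis using B by simp
qed

lemma lin_inj:
  assumes x: "x \<in> carrier R" and y: "y \<in> carrier R" and B: "B \<in> carrier P"
    and mon: "coeff P B (deg R B) = \<one>" and eq: "lin R x \<otimes>\<^bsub>P\<^esub> B = lin R y \<otimes>\<^bsub>P\<^esub> B"
  shows "x = y"
proof -
  let ?j = "deg R B"
  have "coeff P (lin R x \<otimes>\<^bsub>P\<^esub> B) ?j = coeff P (lin R y \<otimes>\<^bsub>P\<^esub> B) ?j" using eq by simp
  then have "(if ?j = 0 then \<zero> else coeff P B (?j - 1)) \<ominus> x = (if ?j = 0 then \<zero> else coeff P B (?j - 1)) \<ominus> y"
    using x y B mon by (simp add: coeff_lin_mult)
  moreover have "(if ?j = 0 then \<zero> else coeff P B (?j - 1)) \<in> carrier R" using B by simp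
  ultimately have "\<ominus> x \<oplus> (if ?j = 0 then \<zero> else coeff P B (?j - 1)) = \<ominus> y \<oplus> (if ?j = 0 then \<zero> else coeff P B (?j - 1))"
    using x y by (simp add: a_minus_def R.a_comm)
  moreover have "(\<ominus> x \<oplus> (if ?j = 0 then \<zero> else coeff P B (?j - 1)) = \<ominus> y \<oplus> (if ?j = 0 then \<zero> else coeff P B (?j - 1))) = (\<ominus> x = \<ominus> y)"
    by (rule R.add.right_cancel) (use x y B in simp_all)
  ultimately have "\<ominus> x = \<ominus> y" by simp
  then have "\<ominus> (\<ominus> x) = \<ominus> (\<ominus> y)" by simp
  then show ?thesis using x y by simp
qed

end

lemma UP_ring_intro: "ring A \<Longrightarrow> UP_ring A"
  by (simp add: UP_ring_def)

lemma hom_coeff_lin_prod: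
  assumes A: "ring A" and B: "ring B" and h: "h \<in> ring_hom A B" and xs: "set xs \<subseteq> carrier A"
  shows "h (coeff (UP A) (lin_prod A xs) j) = coeff (UP B) (lin_prod B (map h xs)) j"
  using xs
proof (induction xs arbitrary: j)
  case Nil
  interpret UA: UP_ring A "UP A" by (rule UP_ring_intro[OF A])
  interpret UB: UP_ring B "UP B" by (rule UP_ring_intro[OF B])
  interpret hh: ring_hom_ring A B h by (rule ring_hom_ringI2[OF A B h])
  show ?case by (simp add: UA.lin_prod_Nil UB.lin_prod_Nil)
next
  case (Cons x xs)
  interpret UA: UP_ring A "UP A" by (rule UP_ring_intro[OF A])
  interpret UB: UP_ring B "UP B" by (rule UP_ring_intro[OF B])
  interpret hh: ring_hom_ring A B h by (rule ring_hom_ringI2[OF A B h])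
  have x: "x \<in> carrier A" and xs: "set xs \<subseteq> carrier A" using Cons.prems by auto
  have hxs: "set (map h xs) \<subseteq> carrier B" using xs by auto
  have IH: "\<And>j. h (coeff (UP A) (lin_prod A xs) j) = coeff (UP B) (lin_prod B (map h xs)) j"
    using Cons.IH[OF xs] .
  show ?case
    using UA.lin_prod_closed[OF xs] UB.lin_prod_closed[OF hxs] x
    by (simp add: UA.lin_prod_Cons UB.lin_prod_Cons UA.coeff_lin_mult UB.coeff_lin_mult IH[symmetric] a_minus_def)
qed

definition lab :: "('r, 'c) ring_scheme \<Rightarrow> ((nat \<Rightarrow> 'r) \<times> (nat \<Rightarrow> 'r)) \<Rightarrow> 'r" where
  "lab R e = (if \<exists>x. x \<in> carrier R \<and> fst e = lin R x \<otimes>\<^bsub>UP R\<^esub> snd e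
              then (SOME x. x \<in> carrier R \<and> fst e = lin R x \<otimes>\<^bsub>UP R\<^esub> snd e) else \<zero>\<^bsub>R\<^esub>)"

definition wprod :: "('r, 'c) ring_scheme \<Rightarrow> ((nat \<Rightarrow> 'r) \<times> (nat \<Rightarrow> 'r)) list \<Rightarrow> 'r" where
  "wprod R w = foldr (\<lambda>e r. lab R e \<otimes>\<^bsub>R\<^esub> r) w \<one>\<^bsub>R\<^esub>"

definition ev :: "('k, 'b) ring_scheme \<Rightarrow> ('r, 'c) ring_scheme \<Rightarrow> ('k \<Rightarrow> 'r)
    \<Rightarrow> (((nat \<Rightarrow> 'r) \<times> (nat \<Rightarrow> 'r)) list \<Rightarrow> 'k) \<Rightarrow> 'r" where
  "ev K R \<phi> f = finsum R (\<lambda>w. \<phi> (f w) \<otimes>\<^bsub>R\<^esub> wprod R w) {w. f w \<noteq> \<zero>\<^bsub>K\<^esub>}"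

locale thm_ctx =
  fixes K :: "('k, 'b) ring_scheme" and R :: "('r, 'c) ring_scheme" and \<phi> :: "'k \<Rightarrow> 'r"
    and P :: "nat \<Rightarrow> 'r" and n :: nat and S :: "'r set"
  assumes K: "field K" and R: "ring R" and alg: "\<phi> \<in> ring_hom K R"
    and central: "\<And>c x. c \<in> carrier K \<Longrightarrow> x \<in> carrier R \<Longrightarrow> \<phi> c \<otimes>\<^bsub>R\<^esub> x = x \<otimes>\<^bsub>R\<^esub> \<phi> c"
    and Scarr: "S \<subseteq> carrier R"
begin

abbreviation "V \<equiv> div_vertices R P n"
abbreviation "E \<equiv> div_edges R P n S"
abbreviation "FA \<equiv> free_alg K E"
abbreviation "ev0 \<equiv> ev K R \<phi>"

lemma K_cring: "cring K"
  using K unfolding field_def domain_def by simp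

sublocale Fc: fa_ctx K E
  by (rule fa_ctx.intro[OF K_cring])

sublocale Rr: ring R by (rule R)

sublocale UPR: UP_ring R "UP R"
  by (rule UP_ring_intro[OF R])

sublocale phi: ring_hom_ring K R \<phi>
  by (rule ring_hom_ringI2[OF Fc.K.ring_axioms R alg])

lemma K_one_nz: "\<one>\<^bsub>K\<^esub> \<noteq> \<zero>\<^bsub>K\<^esub>"
  using K by (simp add: field_def domain_def domain_axioms_def)

lemma lab_closed: "lab R e \<in> carrier R"
proof (cases "\<exists>x. x \<in> carrier R \<and> fst e = lin R x \<otimes>\<^bsub>UP R\<^esub> snd e")
  case True
  then have "(SOME x. x \<in> carrier R \<and> fst e = lin R x \<otimes>\<^bsub>UP R\<^esub> snd e) \<in> carrier R"
    by (rule someI2_ex) simp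
  with True show ?thesis unfolding lab_def by simp
next
  case False
  then show ?thesis unfolding lab_def by (simp only: if_False) simp
qed

lemma wprod_closed: "wprod R w \<in> carrier R"
  by (induction w) (auto simp: wprod_def lab_closed)

lemma wprod_Nil: "wprod R [] = \<one>\<^bsub>R\<^esub>"
  by (simp add: wprod_def)

lemma wprod_Cons: "wprod R (e # w) = lab R e \<otimes>\<^bsub>R\<^esub> wprod R w"
  by (simp add: wprod_def)

lemma wprod_append: "wprod R (u @ v) = wprod R u \<otimes>\<^bsub>R\<^esub> wprod R v"
  by (induction u) (simp_all add: wprod_Nil wprod_Cons lab_closed wprod_closed Rr.m_assoc)

lemma ev_superset:
  assumes f: "\<And>w. f w \<in> carrier K" and U: "finite U" "{w. f w \<noteq> \<zero>\<^bsub>K\<^esub>} \<subseteq> U"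
  shows "ev0 f = (\<Oplus>\<^bsub>R\<^esub>w\<in>U. \<phi> (f w) \<otimes>\<^bsub>R\<^esub> wprod R w)"
  unfolding ev_def
proof (rule Rr.add.finprod_mono_neutral_cong_left)
  show "\<And>i. i \<in> U - {w. f w \<noteq> \<zero>\<^bsub>K\<^esub>} \<Longrightarrow> \<phi> (f i) \<otimes>\<^bsub>R\<^esub> wprod R i = \<zero>\<^bsub>R\<^esub>"
    by (simp add: wprod_closed)
qed (use U in \<open>auto simp: f wprod_closed\<close>)

lemma ev_closed: "(\<And>w. f w \<in> carrier K) \<Longrightarrow> ev0 f \<in> carrier R"
  unfolding ev_def by (rule Rr.finsum_closed) (auto simp: wprod_closed intro!: phi.hom_closed)

lemma ev_add:
  assumes f: "f \<in> carrier FA" and g: "g \<in> carrier FA"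
  shows "ev0 (f \<oplus>\<^bsub>FA\<^esub> g) = ev0 f \<oplus>\<^bsub>R\<^esub> ev0 g"
proof -
  define U where "U = {w. f w \<noteq> \<zero>\<^bsub>K\<^esub>} \<union> {w. g w \<noteq> \<zero>\<^bsub>K\<^esub>}"
  have finU: "finite U" using Fc.fa_fin f g by (auto simp: U_def)
  have cf: "\<And>u. f u \<in> carrier K" "\<And>u. g u \<in> carrier K" using Fc.fa_val f g by auto
  have cfg: "\<And>w. (f \<oplus>\<^bsub>FA\<^esub> g) w \<in> carrier K" using Fc.fa_val[OF Fc.fa_add_closed[OF f g]] .
  have supp: "{w. (f \<oplus>\<^bsub>FA\<^esub> g) w \<noteq> \<zero>\<^bsub>K\<^esub>} \<subseteq> U"
    using cf by (auto simp: U_def Fc.fa_add)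
  have "ev0 (f \<oplus>\<^bsub>FA\<^esub> g) = (\<Oplus>\<^bsub>R\<^esub>w\<in>U. \<phi> ((f \<oplus>\<^bsub>FA\<^esub> g) w) \<otimes>\<^bsub>R\<^esub> wprod R w)"
    by (rule ev_superset[OF cfg finU supp])
  also have "\<dots> = (\<Oplus>\<^bsub>R\<^esub>w\<in>U. \<phi> (f w) \<otimes>\<^bsub>R\<^esub> wprod R w \<oplus>\<^bsub>R\<^esub> \<phi> (g w) \<otimes>\<^bsub>R\<^esub> wprod R w)"
    by (simp add: Fc.fa_add cf Rr.l_distr wprod_closed)
  also have "\<dots> = (\<Oplus>\<^bsub>R\<^esub>w\<in>U. \<phi> (f w) \<otimes>\<^bsub>R\<^esub> wprod R w) \<oplus>\<^bsub>R\<^esub> (\<Oplus>\<^bsub>R\<^esub>w\<in>U. \<phi> (g w) \<otimes>\<^bsub>R\<^esub> wprod R w)"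
    by (simp add: Rr.finsum_addf cf wprod_closed Pi_def)
  also have "\<dots> = ev0 f \<oplus>\<^bsub>R\<^esub> ev0 g"
    using ev_superset[OF cf(1) finU] ev_superset[OF cf(2) finU] by (simp add: U_def)
  finally show ?thesis .
qed

lemma ev_mult:
  assumes f: "f \<in> carrier FA" and g: "g \<in> carrier FA"
  shows "ev0 (f \<otimes>\<^bsub>FA\<^esub> g) = ev0 f \<otimes>\<^bsub>R\<^esub> ev0 g"
proof -
  define Uf where "Uf = {w. f w \<noteq> \<zero>\<^bsub>K\<^esub>}"
  define Ug where "Ug = {w. g w \<noteq> \<zero>\<^bsub>K\<^esub>}"
  define W where "W = (\<lambda>p. fst p @ snd p) ` (Uf \<times> Ug)"
  have finUf: "finite Uf" "finite Ug" using Fc.fa_fin f g by (auto simp: Uf_def Ug_def)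
  have finW: "finite W" using finUf by (simp add: W_def)
  have cf: "\<And>u. f u \<in> carrier K" "\<And>u. g u \<in> carrier K" using Fc.fa_val f g by auto
  define F where "F u = \<phi> (f u) \<otimes>\<^bsub>R\<^esub> wprod R u" for u
  define G where "G v = \<phi> (g v) \<otimes>\<^bsub>R\<^esub> wprod R v" for v
  have cF: "\<And>u. F u \<in> carrier R" "\<And>v. G v \<in> carrier R" by (auto simp: F_def G_def cf wprod_closed)
  have supp: "{w. (f \<otimes>\<^bsub>FA\<^esub> g) w \<noteq> \<zero>\<^bsub>K\<^esub>} \<subseteq> W"
  proof
    fix w assume "w \<in> {w. (f \<otimes>\<^bsub>FA\<^esub> g) w \<noteq> \<zero>\<^bsub>K\<^esub>}"
    then obtain u v where "u @ v = w" "f u \<noteq> \<zero>\<^bsub>K\<^esub>" "g v \<noteq> \<zero>\<^bsub>K\<^esub>"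
      using Fc.fa_mult_nz[OF f g] by blast
    then show "w \<in> W" unfolding W_def Uf_def Ug_def by (intro image_eqI[where x="(u, v)"]) auto
  qed
  have cfg: "\<And>w. (f \<otimes>\<^bsub>FA\<^esub> g) w \<in> carrier K" using Fc.fa_val[OF Fc.fa_mult_closed[OF f g]] .
  have "ev0 (f \<otimes>\<^bsub>FA\<^esub> g) = (\<Oplus>\<^bsub>R\<^esub>w\<in>W. \<phi> ((f \<otimes>\<^bsub>FA\<^esub> g) w) \<otimes>\<^bsub>R\<^esub> wprod R w)"
    by (rule ev_superset[OF cfg finW supp])
  also have "\<dots> = (\<Oplus>\<^bsub>R\<^esub>w\<in>W. \<Oplus>\<^bsub>R\<^esub>p\<in>splits w. F (fst p) \<otimes>\<^bsub>R\<^esub> G (snd p))"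
  proof (rule Rr.finsum_cong')
    fix w assume "w \<in> W"
    have "\<phi> ((f \<otimes>\<^bsub>FA\<^esub> g) w) = (\<Oplus>\<^bsub>R\<^esub>p\<in>splits w. \<phi> (f (fst p)) \<otimes>\<^bsub>R\<^esub> \<phi> (g (snd p)))"
      by (simp add: Fc.fa_mult[OF f g] cf Pi_def comp_def)
    then have "\<phi> ((f \<otimes>\<^bsub>FA\<^esub> g) w) \<otimes>\<^bsub>R\<^esub> wprod R w
        = (\<Oplus>\<^bsub>R\<^esub>p\<in>splits w. \<phi> (f (fst p)) \<otimes>\<^bsub>R\<^esub> \<phi> (g (snd p)) \<otimes>\<^bsub>R\<^esub> wprod R w)"
      by (simp add: Rr.finsum_ldistr cf wprod_closed Pi_def)
    also have "\<dots> = (\<Oplus>\<^bsub>R\<^esub>p\<in>splits w. F (fst p) \<otimes>\<^bsub>R\<^esub> G (snd p))"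
    proof (rule Rr.finsum_cong')
      fix p assume "p \<in> splits w"
      then have wp: "wprod R w = wprod R (fst p) \<otimes>\<^bsub>R\<^esub> wprod R (snd p)"
        by (auto simp: splits_def wprod_append)
      have "\<phi> (f (fst p)) \<otimes>\<^bsub>R\<^esub> \<phi> (g (snd p)) \<otimes>\<^bsub>R\<^esub> wprod R w
          = \<phi> (f (fst p)) \<otimes>\<^bsub>R\<^esub> (\<phi> (g (snd p)) \<otimes>\<^bsub>R\<^esub> wprod R (fst p)) \<otimes>\<^bsub>R\<^esub> wprod R (snd p)"
        by (simp add: wp Rr.m_assoc cf wprod_closed)
      also have "\<dots> = \<phi> (f (fst p)) \<otimes>\<^bsub>R\<^esub> (wprod R (fst p) \<otimes>\<^bsub>R\<^esub> \<phi> (g (snd p))) \<otimes>\<^bsub>R\<^esub> wprod R (snd p)"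
        by (simp add: central cf wprod_closed)
      also have "\<dots> = F (fst p) \<otimes>\<^bsub>R\<^esub> G (snd p)"
        by (simp add: F_def G_def Rr.m_assoc cf wprod_closed)
      finally show "\<phi> (f (fst p)) \<otimes>\<^bsub>R\<^esub> \<phi> (g (snd p)) \<otimes>\<^bsub>R\<^esub> wprod R w = F (fst p) \<otimes>\<^bsub>R\<^esub> G (snd p)" .
    qed (auto simp: cF)
    finally show "\<phi> ((f \<otimes>\<^bsub>FA\<^esub> g) w) \<otimes>\<^bsub>R\<^esub> wprod R w = (\<Oplus>\<^bsub>R\<^esub>p\<in>splits w. F (fst p) \<otimes>\<^bsub>R\<^esub> G (snd p))" .
  qed (auto simp: cfg wprod_closed cF intro!: Rr.finsum_closed)
  also have "\<dots> = (\<Oplus>\<^bsub>R\<^esub>p\<in>{(u, v). u @ v \<in> W}. F (fst p) \<otimes>\<^bsub>R\<^esub> G (snd p))"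
    by (rule Rr.finsum_words_splits[OF finW]) (simp add: cF)
  also have "\<dots> = (\<Oplus>\<^bsub>R\<^esub>p\<in>Uf \<times> Ug. F (fst p) \<otimes>\<^bsub>R\<^esub> G (snd p))"
  proof (rule sym, rule Rr.add.finprod_mono_neutral_cong_left)
    have "{(u, v). u @ v \<in> W} \<subseteq> (\<Union>w\<in>W. splits w)" by (auto simp: splits_def)
    then show "finite {(u, v). u @ v \<in> W}" by (rule finite_subset) (simp add: finW)
    show "Uf \<times> Ug \<subseteq> {(u, v). u @ v \<in> W}" unfolding W_def by (auto intro: image_eqI[where x="(a, b)" for a b])
    show "\<And>i. i \<in> {(u, v). u @ v \<in> W} - Uf \<times> Ug \<Longrightarrow> F (fst i) \<otimes>\<^bsub>R\<^esub> G (snd i) = \<zero>\<^bsub>R\<^esub>"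
      by (auto simp: F_def G_def Uf_def Ug_def cf wprod_closed)
  qed (auto simp: cF)
  also have "\<dots> = (\<Oplus>\<^bsub>R\<^esub>u\<in>Uf. \<Oplus>\<^bsub>R\<^esub>v\<in>Ug. F u \<otimes>\<^bsub>R\<^esub> G v)"
    by (rule Rr.finsum_Sigma[symmetric]) (auto simp: finUf cF)
  also have "\<dots> = (\<Oplus>\<^bsub>R\<^esub>u\<in>Uf. F u \<otimes>\<^bsub>R\<^esub> (\<Oplus>\<^bsub>R\<^esub>v\<in>Ug. G v))"
    by (rule Rr.finsum_cong') (auto simp: Rr.finsum_rdistr finUf cF intro!: Rr.finsum_closed)
  also have "\<dots> = (\<Oplus>\<^bsub>R\<^esub>u\<in>Uf. F u) \<otimes>\<^bsub>R\<^esub> (\<Oplus>\<^bsub>R\<^esub>v\<in>Ug. G v)"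
    by (rule Rr.finsum_ldistr[symmetric]) (auto simp: finUf cF intro!: Rr.finsum_closed)
  also have "\<dots> = ev0 f \<otimes>\<^bsub>R\<^esub> ev0 g"
    by (simp add: ev_def F_def G_def Uf_def Ug_def)
  finally show ?thesis .
qed

lemma ev_single:
  assumes "f \<in> carrier FA" and "\<And>u. u \<noteq> w \<Longrightarrow> f u = \<zero>\<^bsub>K\<^esub>"
  shows "ev0 f = \<phi> (f w) \<otimes>\<^bsub>R\<^esub> wprod R w"
proof -
  have "ev0 f = (\<Oplus>\<^bsub>R\<^esub>u\<in>{w}. \<phi> (f u) \<otimes>\<^bsub>R\<^esub> wprod R u)"
    by (rule ev_superset) (use assms Fc.fa_val in auto)
  then show ?thesis using assms(1) by (simp add: Fc.fa_val wprod_closed)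
qed

lemma ev_one: "ev0 \<one>\<^bsub>FA\<^esub> = \<one>\<^bsub>R\<^esub>"
  using ev_single[OF Fc.fa_one_closed, of "[]"] by (simp add: Fc.fa_one wprod_Nil)

lemma ev_hom: "ev0 \<in> ring_hom FA R"
proof (rule ring_hom_memI)
  show "\<And>x. x \<in> carrier FA \<Longrightarrow> ev0 x \<in> carrier R"
    by (rule ev_closed) (simp add: Fc.fa_val)
qed (simp_all add: ev_add ev_mult ev_one)

lemma gen_closed: "e \<in> E \<Longrightarrow> free_gen K e \<in> carrier FA"
proof -
  assume e: "e \<in> E"
  have "{w. free_gen K e w \<noteq> \<zero>\<^bsub>K\<^esub>} \<subseteq> {[e]}" by (auto simp: free_gen_def)
  then have "finite {w. free_gen K e w \<noteq> \<zero>\<^bsub>K\<^esub>}" by (rule finite_subset) simp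
  then show ?thesis using e by (simp add: Fc.fa_carrier_iff free_gen_def)
qed

lemma ev_gen: "e \<in> E \<Longrightarrow> ev0 (free_gen K e) = lab R e"
  using ev_single[OF gen_closed, of e "[e]"]
  by (simp add: free_gen_def wprod_Cons wprod_Nil lab_closed)

lemma scalar_closed: "c \<in> carrier K \<Longrightarrow> free_scalar K c \<in> carrier FA"
proof -
  assume c: "c \<in> carrier K"
  have "{w. free_scalar K c w \<noteq> \<zero>\<^bsub>K\<^esub>} \<subseteq> {[]}" by (auto simp: free_scalar_def)
  then have "finite {w. free_scalar K c w \<noteq> \<zero>\<^bsub>K\<^esub>}" by (rule finite_subset) simp
  then show ?thesis using c by (simp add: Fc.fa_carrier_iff free_scalar_def)
qed

lemma ev_scalar: "c \<in> carrier K \<Longrightarrow> ev0 (free_scalar K c) = \<phi> c"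
  using ev_single[OF scalar_closed, of c "[]"]
  by (simp add: free_scalar_def wprod_Nil)

end

context thm_ctx
begin

lemma vert_monic: "B \<in> V \<Longrightarrow> B \<in> carrier (UP R) \<and> coeff (UP R) B (deg R B) = \<one>\<^bsub>R\<^esub>"
  by (simp add: div_vertices_def monic_poly_def)

lemma lab_edge:
  assumes "(B1, B2) \<in> E"
  shows "B1 = lin R (lab R (B1, B2)) \<otimes>\<^bsub>UP R\<^esub> B2"
proof -
  from assms obtain x where x: "x \<in> S" "B1 = lin R x \<otimes>\<^bsub>UP R\<^esub> B2" by (auto simp: div_edges_def)
  then have ex: "\<exists>x. x \<in> carrier R \<and> fst (B1, B2) = lin R x \<otimes>\<^bsub>UP R\<^esub> snd (B1, B2)"
    using Scarr by auto
  have "(SOME x. x \<in> carrier R \<and> fst (B1, B2) = lin R x \<otimes>\<^bsub>UP R\<^esub> snd (B1, B2)) \<in> carrier R \<and>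
        fst (B1, B2) = lin R (SOME x. x \<in> carrier R \<and> fst (B1, B2) = lin R x \<otimes>\<^bsub>UP R\<^esub> snd (B1, B2)) \<otimes>\<^bsub>UP R\<^esub> snd (B1, B2)"
    by (rule someI_ex[OF ex])
  then show ?thesis using ex unfolding lab_def by simp
qed

lemma lab_unique:
  assumes e: "(B1, B2) \<in> E" and x: "x \<in> carrier R" and eq: "B1 = lin R x \<otimes>\<^bsub>UP R\<^esub> B2"
  shows "lab R (B1, B2) = x"
proof -
  have B2: "B2 \<in> V" using e by (simp add: div_edges_def)
  have "lin R (lab R (B1, B2)) \<otimes>\<^bsub>UP R\<^esub> B2 = lin R x \<otimes>\<^bsub>UP R\<^esub> B2"
    using lab_edge[OF e] eq by simp
  then show ?thesis
    using UPR.lin_inj[OF lab_closed x] vert_monic[OF B2] by blast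
qed

lemma path_prod:
  assumes "is_path E v p w" and "w \<in> carrier (UP R)"
  shows "v = lin_prod R (map (lab R) p) \<otimes>\<^bsub>UP R\<^esub> w \<and> set p \<subseteq> E"
  using assms
proof (induction rule: is_path.induct)
  case (path_nil v)
  then show ?case by (simp add: UPR.lin_prod_Nil)
next
  case (path_cons v u es w)
  have labs: "set (map (lab R) es) \<subseteq> carrier R" by (auto simp: lab_closed)
  from path_cons have IH: "u = lin_prod R (map (lab R) es) \<otimes>\<^bsub>UP R\<^esub> w" "set es \<subseteq> E" by auto
  have "v = lin R (lab R (v, u)) \<otimes>\<^bsub>UP R\<^esub> u" by (rule lab_edge[OF path_cons(1)])
  also have "\<dots> = lin R (lab R (v, u)) \<otimes>\<^bsub>UP R\<^esub> (lin_prod R (map (lab R) es) \<otimes>\<^bsub>UP R\<^esub> w)"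
    using IH by simp
  also have "\<dots> = lin_prod R (map (lab R) ((v, u) # es)) \<otimes>\<^bsub>UP R\<^esub> w"
    using UPR.lin_closed[OF lab_closed] UPR.lin_prod_closed[OF labs] path_cons.prems
    by (simp add: UPR.lin_prod_Cons UPR.P.m_assoc)
  finally show ?case using IH path_cons(1) by simp
qed

lemma ev_hom_ring: "ring_hom_ring FA R ev0"
  by (rule ring_hom_ringI2[OF Fc.fa_ring R ev_hom])

lemma ev_coeff:
  assumes p: "set p \<subseteq> E"
  shows "ev0 (coeff (UP FA) (lin_prod FA (map (free_gen K) p)) j) = coeff (UP R) (lin_prod R (map (lab R) p)) j"
proof -
  have gens: "set (map (free_gen K) p) \<subseteq> carrier FA" using p gen_closed by auto
  have m: "map ev0 (map (free_gen K) p) = map (lab R) p" using p ev_gen by auto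
  show ?thesis
    using hom_coeff_lin_prod[OF Fc.fa_ring R ev_hom gens, of j] unfolding m .
qed

lemma rel_carrier: "path_relations K V E \<subseteq> carrier FA"
proof
  interpret UF: UP_ring FA "UP FA" by (rule UP_ring_intro[OF Fc.fa_ring])
  fix r assume rr: "r \<in> path_relations K V E"
  obtain v w p q j where r: "is_path E v p w" "is_path E v q w" "w \<in> V"
    "r = coeff (UP FA) (lin_prod FA (map (free_gen K) p)) j \<ominus>\<^bsub>FA\<^esub>
         coeff (UP FA) (lin_prod FA (map (free_gen K) q)) j"
    using rr unfolding path_relations_def mem_Collect_eq by (elim exE conjE) (rule that, assumption+)
  have w: "w \<in> carrier (UP R)" using vert_monic[OF r(3)] by simp
  have sp: "set p \<subseteq> E" "set q \<subseteq> E" using path_prod[OF r(1) w] path_prod[OF r(2) w] by auto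
  have gp: "set (map (free_gen K) p) \<subseteq> carrier FA" "set (map (free_gen K) q) \<subseteq> carrier FA"
    using sp gen_closed by auto
  show "r \<in> carrier FA"
    using r(4) UF.lin_prod_closed[OF gp(1)] UF.lin_prod_closed[OF gp(2)] by simp
qed

lemma rel_kernel: "path_relations K V E \<subseteq> a_kernel FA R ev0"
proof
  interpret UF: UP_ring FA "UP FA" by (rule UP_ring_intro[OF Fc.fa_ring])
  interpret eh: ring_hom_ring FA R ev0 by (rule ev_hom_ring)
  fix r assume rr: "r \<in> path_relations K V E"
  obtain v w p q j where r: "is_path E v p w" "is_path E v q w" "w \<in> V"
    "r = coeff (UP FA) (lin_prod FA (map (free_gen K) p)) j \<ominus>\<^bsub>FA\<^esub>
         coeff (UP FA) (lin_prod FA (map (free_gen K) q)) j"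
    using rr unfolding path_relations_def mem_Collect_eq by (elim exE conjE) (rule that, assumption+)
  have w: "w \<in> carrier (UP R)" and mon: "coeff (UP R) w (deg R w) = \<one>\<^bsub>R\<^esub>"
    using vert_monic[OF r(3)] by auto
  have pp: "v = lin_prod R (map (lab R) p) \<otimes>\<^bsub>UP R\<^esub> w" "set p \<subseteq> E" using path_prod[OF r(1) w] by auto
  have qq: "v = lin_prod R (map (lab R) q) \<otimes>\<^bsub>UP R\<^esub> w" "set q \<subseteq> E" using path_prod[OF r(2) w] by auto
  have labs: "set (map (lab R) p) \<subseteq> carrier R" "set (map (lab R) q) \<subseteq> carrier R" by (auto simp: lab_closed)
  have eqpq: "lin_prod R (map (lab R) p) = lin_prod R (map (lab R) q)"
    by (rule UPR.monic_cancel[OF UPR.lin_prod_closed[OF labs(1)] UPR.lin_prod_closed[OF labs(2)] w mon])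
       (rule trans[OF sym[OF pp(1)] qq(1)])
  have gp: "set (map (free_gen K) p) \<subseteq> carrier FA" "set (map (free_gen K) q) \<subseteq> carrier FA"
    using pp(2) qq(2) gen_closed by auto
  have c1: "coeff (UP FA) (lin_prod FA (map (free_gen K) p)) j \<in> carrier FA"
    and c2: "coeff (UP FA) (lin_prod FA (map (free_gen K) q)) j \<in> carrier FA"
    using UF.lin_prod_closed[OF gp(1)] UF.lin_prod_closed[OF gp(2)] by simp_all
  have "ev0 r = ev0 (coeff (UP FA) (lin_prod FA (map (free_gen K) p)) j) \<ominus>\<^bsub>R\<^esub>
                ev0 (coeff (UP FA) (lin_prod FA (map (free_gen K) q)) j)"
  proof -
    have "ev0 r = ev0 (coeff (UP FA) (lin_prod FA (map (free_gen K) p)) j \<oplus>\<^bsub>FA\<^esub>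
         \<ominus>\<^bsub>FA\<^esub> coeff (UP FA) (lin_prod FA (map (free_gen K) q)) j)"
      by (simp only: r(4) a_minus_def)
    also have "\<dots> = ev0 (coeff (UP FA) (lin_prod FA (map (free_gen K) p)) j) \<oplus>\<^bsub>R\<^esub>
         ev0 (\<ominus>\<^bsub>FA\<^esub> coeff (UP FA) (lin_prod FA (map (free_gen K) q)) j)"
      by (rule eh.hom_add[OF c1 abelian_group.a_inv_closed[OF ring.is_abelian_group[OF Fc.fa_ring] c2]])
    also have "\<dots> = ev0 (coeff (UP FA) (lin_prod FA (map (free_gen K) p)) j) \<oplus>\<^bsub>R\<^esub>
         \<ominus>\<^bsub>R\<^esub> ev0 (coeff (UP FA) (lin_prod FA (map (free_gen K) q)) j)"
      by (simp only: eh.hom_a_inv[OF c2])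
    finally show ?thesis by (simp only: a_minus_def)
  qed
  also have "\<dots> = coeff (UP R) (lin_prod R (map (lab R) q)) j \<ominus>\<^bsub>R\<^esub> coeff (UP R) (lin_prod R (map (lab R) q)) j"
    using ev_coeff[OF pp(2), of j] ev_coeff[OF qq(2), of j] eqpq by simp
  also have "\<dots> = \<zero>\<^bsub>R\<^esub>"
    using UPR.coeff_closed[OF UPR.lin_prod_closed[OF labs(2)]] by (simp add: Rr.r_neg a_minus_def)
  finally show "r \<in> a_kernel FA R ev0"
    using rel_carrier rr unfolding a_kernel_def' by blast
qed

abbreviation "I \<equiv> rel_ideal K V E"
abbreviation "GA \<equiv> graph_alg K V E"

lemma I_ideal: "ideal I FA"
  unfolding rel_ideal_def by (rule ring.genideal_ideal[OF Fc.fa_ring rel_carrier])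

lemma I_kernel: "I \<subseteq> a_kernel FA R ev0"
  unfolding rel_ideal_def
  by (rule ring.genideal_minimal[OF Fc.fa_ring ring_hom_ring.kernel_is_ideal[OF ev_hom_ring] rel_kernel])

lemma GA_ring: "ring GA"
  unfolding graph_alg_def by (rule ideal.quotient_is_ring[OF I_ideal])

definition alpha :: "(((nat \<Rightarrow> 'r) \<times> (nat \<Rightarrow> 'r)) list \<Rightarrow> 'k) set \<Rightarrow> 'r" where
  "alpha X = the_elem (ev0 ` X)"

lemma ev_coset:
  assumes f: "f \<in> carrier FA"
  shows "ev0 ` (I +>\<^bsub>FA\<^esub> f) = {ev0 f}"
proof -
  interpret II: ideal I FA by (rule I_ideal)
  have eq: "ev0 (i \<oplus>\<^bsub>FA\<^esub> f) = ev0 f" if i: "i \<in> I" for i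
  proof -
    have ic: "i \<in> carrier FA" and i0: "ev0 i = \<zero>\<^bsub>R\<^esub>" using I_kernel i by (auto simp: a_kernel_def')
    have "ev0 (i \<oplus>\<^bsub>FA\<^esub> f) = ev0 i \<oplus>\<^bsub>R\<^esub> ev0 f" by (rule ev_add[OF ic f])
    also have "\<dots> = ev0 f" using i0 ev_closed[OF Fc.fa_val[OF f]] by simp
    finally show ?thesis .
  qed
  have z: "\<zero>\<^bsub>FA\<^esub> \<in> I" by (rule additive_subgroup.zero_closed[OF ideal.axioms(1)[OF I_ideal]])
  have "ev0 ` (I +>\<^bsub>FA\<^esub> f) = (\<lambda>i. ev0 (i \<oplus>\<^bsub>FA\<^esub> f)) ` I"
    unfolding a_r_coset_def' by blast
  also have "\<dots> = (\<lambda>i. ev0 f) ` I"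
    by (rule image_cong[OF refl eq])
  also have "\<dots> = {ev0 f}" using z by blast
  finally show ?thesis .
qed

lemma alpha_class: "f \<in> carrier FA \<Longrightarrow> alpha (graph_class K V E f) = ev0 f"
  unfolding alpha_def graph_class_def by (simp only: ev_coset the_elem_eq)

lemma GA_carrier_eq: "carrier GA = (\<Union>a\<in>carrier FA. {graph_class K V E a})"
  unfolding graph_alg_def FactRing_def graph_class_def A_RCOSETS_def' by simp

lemma class_closed: "f \<in> carrier FA \<Longrightarrow> graph_class K V E f \<in> carrier GA"
  unfolding GA_carrier_eq by blast

lemma GA_carrier: "X \<in> carrier GA \<Longrightarrow> \<exists>f \<in> carrier FA. X = graph_class K V E f"
  unfolding GA_carrier_eq by blast

lemma GA_mult: "f \<in> carrier FA \<Longrightarrow> g \<in> carrier FA \<Longrightarrow>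
    graph_class K V E f \<otimes>\<^bsub>GA\<^esub> graph_class K V E g = graph_class K V E (f \<otimes>\<^bsub>FA\<^esub> g)"
  unfolding graph_alg_def graph_class_def FactRing_def
  by (simp only: monoid.simps ideal.rcoset_mult_add[OF I_ideal])

lemma GA_add: "f \<in> carrier FA \<Longrightarrow> g \<in> carrier FA \<Longrightarrow>
    graph_class K V E f \<oplus>\<^bsub>GA\<^esub> graph_class K V E g = graph_class K V E (f \<oplus>\<^bsub>FA\<^esub> g)"
  unfolding graph_alg_def graph_class_def FactRing_def
  by (simp only: ring.simps ideal.a_rcos_sum[OF I_ideal])

lemma GA_one: "\<one>\<^bsub>GA\<^esub> = graph_class K V E \<one>\<^bsub>FA\<^esub>"
  unfolding graph_alg_def graph_class_def FactRing_def by simp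

lemma alpha_hom: "alpha \<in> ring_hom GA R"
proof (rule ring_hom_memI)
  fix X assume X: "X \<in> carrier GA"
  then obtain f where f: "f \<in> carrier FA" "X = graph_class K V E f" using GA_carrier by blast
  show "alpha X \<in> carrier R" using f alpha_class ev_closed Fc.fa_val by simp
  fix Y assume Y: "Y \<in> carrier GA"
  then obtain g where g: "g \<in> carrier FA" "Y = graph_class K V E g" using GA_carrier by blast
  show "alpha (X \<otimes>\<^bsub>GA\<^esub> Y) = alpha X \<otimes>\<^bsub>R\<^esub> alpha Y"
    using f g by (simp add: GA_mult alpha_class Fc.fa_mult_closed ev_mult)
  show "alpha (X \<oplus>\<^bsub>GA\<^esub> Y) = alpha X \<oplus>\<^bsub>R\<^esub> alpha Y"
    using f g by (simp add: GA_add alpha_class Fc.fa_add_closed ev_add)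
next
  show "alpha \<one>\<^bsub>GA\<^esub> = \<one>\<^bsub>R\<^esub>"
    by (simp add: GA_one alpha_class Fc.fa_one_closed ev_one)
qed

end

theorem theorem2p5p1:
  fixes K :: "('k, 'b) ring_scheme" and R :: "('r, 'c) ring_scheme"
    and \<phi> :: "'k \<Rightarrow> 'r" and P :: "nat \<Rightarrow> 'r" and n :: nat
    and S :: "'r set" and a :: "nat \<Rightarrow> 'r"
  assumes K: "field K"
    and R: "ring R"
    and alg: "\<phi> \<in> ring_hom K R"
    and central: "\<And>c x. c \<in> carrier K \<Longrightarrow> x \<in> carrier R \<Longrightarrow> \<phi> c \<otimes>\<^bsub>R\<^esub> x = x \<otimes>\<^bsub>R\<^esub> \<phi> c"
    and P: "monic_poly R P" "deg R P = n"
    and S: "\<And>x. x \<in> S \<Longrightarrow> pseudo_root R P x"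
    and a: "\<And>i. i < n \<Longrightarrow> a i \<in> S"
    and Pfac: "P = lin_prod R (map a [0..<n])"
  shows "\<exists>\<alpha>. \<alpha> \<in> ring_hom (graph_alg K (div_vertices R P n) (div_edges R P n S)) R
      \<and> (\<forall>c \<in> carrier K. \<alpha> (graph_class K (div_vertices R P n) (div_edges R P n S)
                                (free_scalar K c)) = \<phi> c)
      \<and> (\<forall>B1 B2 x. (B1, B2) \<in> div_edges R P n S \<longrightarrow> x \<in> carrier R
              \<longrightarrow> B1 = lin R x \<otimes>\<^bsub>UP R\<^esub> B2
              \<longrightarrow> \<alpha> (graph_class K (div_vertices R P n) (div_edges R P n S)
                                (free_gen K (B1, B2))) = x)
      \<and> (\<forall>p. is_path (div_edges R P n S) P p \<one>\<^bsub>UP R\<^esub> \<longrightarrow>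
            (\<forall>j. \<alpha> (coeff (UP (graph_alg K (div_vertices R P n) (div_edges R P n S)))
                       (graph_path_poly K (div_vertices R P n) (div_edges R P n S) p) j)
                 = coeff (UP R) P j))"
proof -
  have Scarr: "S \<subseteq> carrier R" using S by (auto simp: pseudo_root_def)
  interpret T: thm_ctx K R \<phi> P n S
    by (rule thm_ctx.intro) (use K R alg central Scarr in auto)
  let ?V = "div_vertices R P n" and ?E = "div_edges R P n S"
  let ?GA = "graph_alg K ?V ?E"
  have p1: "T.alpha \<in> ring_hom ?GA R" by (rule T.alpha_hom)
  have p2: "\<forall>c \<in> carrier K. T.alpha (graph_class K ?V ?E (free_scalar K c)) = \<phi> c"
    by (simp add: T.alpha_class T.scalar_closed T.ev_scalar)
  have p3: "\<forall>B1 B2 x. (B1, B2) \<in> ?E \<longrightarrow> x \<in> carrier R \<longrightarrow> B1 = lin R x \<otimes>\<^bsub>UP R\<^esub> B2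
      \<longrightarrow> T.alpha (graph_class K ?V ?E (free_gen K (B1, B2))) = x"
    by (auto simp: T.alpha_class T.gen_closed T.ev_gen T.lab_unique)
  have p4: "\<forall>j. T.alpha (coeff (UP ?GA) (graph_path_poly K ?V ?E p) j) = coeff (UP R) P j"
    if p: "is_path ?E P p \<one>\<^bsub>UP R\<^esub>" for p
  proof
    fix j
    have one: "\<one>\<^bsub>UP R\<^esub> \<in> carrier (UP R)" by simp
    have pp: "P = lin_prod R (map (lab R) p) \<otimes>\<^bsub>UP R\<^esub> \<one>\<^bsub>UP R\<^esub>" "set p \<subseteq> ?E"
      using T.path_prod[OF p one] by auto
    have labs: "set (map (lab R) p) \<subseteq> carrier R" by (auto simp: T.lab_closed)
    have P': "P = lin_prod R (map (lab R) p)"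
      using pp(1) T.UPR.lin_prod_closed[OF labs] by simp
    have cls: "set (map (\<lambda>e. graph_class K ?V ?E (free_gen K e)) p) \<subseteq> carrier ?GA"
      using pp(2) T.class_closed T.gen_closed by auto
    have m: "map T.alpha (map (\<lambda>e. graph_class K ?V ?E (free_gen K e)) p) = map (lab R) p"
      using pp(2) by (auto simp: T.alpha_class T.gen_closed T.ev_gen)
    show "T.alpha (coeff (UP ?GA) (graph_path_poly K ?V ?E p) j) = coeff (UP R) P j"
      unfolding graph_path_poly_def
      using hom_coeff_lin_prod[OF T.GA_ring R T.alpha_hom cls, of j] unfolding m P'[symmetric] .
  qed
  show ?thesis
    by (rule exI[where x = T.alpha]) (use p1 p2 p3 p4 in blast)
qed

end
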